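(* Let $A\in\mathbb{C}^{n\times n}$ with $\mathrm{Ind}(A)=k$, let $m\in\mathbb{N}=\{1,2,\dots\}$ and $X\in\mathbb{C}^{n\times n}$. The following are equivalent: (a) $X=A^{\#_m}$; (b) $AX=(A^{\mathrm{cEP}})^mA^mP_{A^m}$ and $\mathcal{R}(X)=\mathcal{R}(A^k)$; (c) $AX=(A^{\mathrm{cEP}})^mA^mP_{A^m}$ and $AX^2=X$.
   Context: For $A\in\mathbb{C}^{n\times n}$: $A^\dagger$ Moore–Penrose inverse, $P_A=AA^\dagger$, $\mathcal{R}(\cdot)$ column space. The index $\mathrm{Ind}(A)$ is the smallest nonnegative integer $k$ with $\mathcal{R}(A^k)=\mathcal{R}(A^{k+1})$ ($A^0=I_n$). The core-EP inverse $A^{\mathrm{cEP}}$ is the unique $X$ with $XAX=X$ and $\mathcal{R}(X)=\mathcal{R}(X^* )=\mathcal{R}(A^k)$. For $m\in\mathbb{N}$, the $m$-weak group inverse is $A^{\mathrm{WG}_m}:=(A^{\mathrm{cEP}})^{m+1}A^m$ and the $m$-weak core inverse is $A^{\#_m}:=A^{\mathrm{WG}_m}P_{A^m}$. *)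

theory Defs
  imports "HOL-Analysis.Analysis"
begin

text \<open>Complex n x n matrices are rendered as complex^'n^'n (n = CARD('n)).\<close>

definition ctrans :: "complex^'n^'m \<Rightarrow> complex^'m^'n" where
  "ctrans A = (\<chi> i j. cnj (A $ j $ i))"

definition colsp :: "complex^'n^'m \<Rightarrow> (complex^'m) set" where
  "colsp A = range (\<lambda>x. A *v x)"

primrec mpow :: "complex^'n^'n \<Rightarrow> nat \<Rightarrow> complex^'n^'n" where
  "mpow A 0 = mat 1"
| "mpow A (Suc k) = A ** mpow A k"

definition mp_inv :: "complex^'n^'n \<Rightarrow> complex^'n^'n" where
  "mp_inv A = (THE X. A ** X ** A = A \<and> X ** A ** X = X \<and>
                      ctrans (A ** X) = A ** X \<and> ctrans (X ** A) = X ** A)"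

definition proj :: "complex^'n^'n \<Rightarrow> complex^'n^'n" where
  "proj A = A ** mp_inv A"

definition mindex :: "complex^'n^'n \<Rightarrow> nat" where
  "mindex A = (LEAST k. colsp (mpow A k) = colsp (mpow A (Suc k)))"

definition core_ep :: "complex^'n^'n \<Rightarrow> complex^'n^'n" where
  "core_ep A = (THE X. X ** A ** X = X \<and> colsp X = colsp (mpow A (mindex A)) \<and>
                       colsp (ctrans X) = colsp (mpow A (mindex A)))"

definition m_wg :: "nat \<Rightarrow> complex^'n^'n \<Rightarrow> complex^'n^'n" where
  "m_wg m A = mpow (core_ep A) (m + 1) ** mpow A m"

definition m_wcore :: "nat \<Rightarrow> complex^'n^'n \<Rightarrow> complex^'n^'n" where
  "m_wcore m A = m_wg m A ** proj (mpow A m)"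

end

theory Submission
  imports Defs
begin


lemma ctrans_ctrans[simp]: "ctrans (ctrans A) = A"
  by (simp add: ctrans_def vec_eq_iff)

lemma ctrans_mult: "ctrans (A ** B) = ctrans B ** ctrans A"
  by (simp add: ctrans_def matrix_matrix_mult_def vec_eq_iff mult.commute)

lemma ctrans_diff: "ctrans (A - B) = ctrans A - ctrans B"
  by (simp add: ctrans_def vec_eq_iff)

lemma mm_diff_l: "(A::'a::ring_1^'n^'m) ** (B - C) = A ** B - A ** C"
  by (simp add: matrix_matrix_mult_def vec_eq_iff sum_subtractf algebra_simps)

lemma mm_diff_r: "((A::'a::ring_1^'n^'m) - B) ** C = A ** C - B ** C"
  by (simp add: matrix_matrix_mult_def vec_eq_iff sum_subtractf algebra_simps)

definition cinner :: "complex^'n \<Rightarrow> complex^'n \<Rightarrow> complex" where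
  "cinner x y = (\<Sum>i\<in>UNIV. x$i * cnj (y$i))"

lemma cinner_mat: "cinner (M *v x) y = cinner x (ctrans M *v y)"
  unfolding cinner_def matrix_vector_mult_def ctrans_def
  apply (simp add: sum_distrib_left sum_distrib_right mult_ac)
  apply (rule sum.swap)
  done

lemma cinner_self_0: assumes "cinner x x = 0" shows "x = 0"
proof -
  have e: "complex_of_real (\<Sum>i\<in>UNIV. (cmod (x$i))^2) = cinner x x"
    by (simp only: cinner_def complex_norm_square of_real_sum)
  then have "(\<Sum>i\<in>UNIV. (cmod (x$i))^2) = 0" using assms by (metis of_real_eq_0_iff)
  then have "\<forall>i\<in>UNIV. (cmod (x$i))^2 = 0" by (subst (asm) sum_nonneg_eq_0_iff) auto
  then show ?thesis by (simp add: vec_eq_iff)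
qed

lemma cinner_0_right[simp]: "cinner x 0 = 0" by (simp add: cinner_def)

lemma ctrans_mult_self_0: assumes "ctrans E ** E = 0" shows "E = 0"
proof -
  have "E *v x = 0" for x
  proof -
    have "cinner (E *v x) (E *v x) = cinner x ((ctrans E ** E) *v x)"
      by (simp add: cinner_mat matrix_vector_mul_assoc)
    then show ?thesis using assms by (intro cinner_self_0) simp
  qed
  then show ?thesis by (simp add: matrix_eq)
qed

lemma one_inverse_exists: "\<exists>Y. (M::complex^'n^'n) ** Y ** M = M"
proof -
  obtain g where g: "Vector_Spaces.linear (*s) (*s) g" "\<forall>v\<in>((*v) M) ` UNIV. M *v (g v) = v"
    using vec.linear_exists_right_inverse_on[OF matrix_vector_mul_linear_gen[of M] vec.subspace_UNIV]
    by blast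
  have "(M ** matrix g ** M) *v x = M *v x" for x
    using g by (simp add: matrix_vector_mul_assoc[symmetric] matrix_works)
  then show ?thesis by (auto simp: matrix_eq)
qed

lemma one_three: "\<exists>G. (M::complex^'n^'n) ** G ** M = M \<and> ctrans (M ** G) = M ** G"
proof -
  define H where "H = ctrans M ** M"
  have hH: "ctrans H = H" by (simp add: H_def ctrans_mult)
  obtain Y where Y: "H ** Y ** H = H" using one_inverse_exists by blast
  have Y': "H ** ctrans Y ** H = H"
    using arg_cong[OF Y, of ctrans] by (simp add: ctrans_mult hH matrix_mul_assoc)
  define Z where "Z = Y ** H ** ctrans Y"
  have hZ: "ctrans Z = Z" by (simp add: Z_def ctrans_mult hH matrix_mul_assoc)
  have HZH: "H ** Z ** H = H"
    by (simp add: Z_def matrix_mul_assoc Y Y')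
  then have HZH': "ctrans M ** M ** Z ** ctrans M ** M = ctrans M ** M"
    by (simp add: H_def matrix_mul_assoc)
  define E where "E = M ** Z ** H - M"
  have cE: "ctrans E = H ** Z ** ctrans M - ctrans M"
    by (simp add: E_def ctrans_diff ctrans_mult hH hZ matrix_mul_assoc)
  have "ctrans E ** E = 0"
    unfolding cE unfolding E_def H_def
    by (simp add: mm_diff_l mm_diff_r matrix_mul_assoc HZH')
  then have "E = 0" by (rule ctrans_mult_self_0)
  then have "M ** (Z ** ctrans M) ** M = M" by (simp add: E_def H_def matrix_mul_assoc)
  moreover have "ctrans (M ** (Z ** ctrans M)) = M ** (Z ** ctrans M)"
    by (simp add: ctrans_mult hZ matrix_mul_assoc)
  ultimately show ?thesis by blast
qed

lemma one_four: "\<exists>F. (M::complex^'n^'n) ** F ** M = M \<and> ctrans (F ** M) = F ** M"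
proof -
  obtain G where G: "ctrans M ** G ** ctrans M = ctrans M" "ctrans (ctrans M ** G) = ctrans M ** G"
    using one_three by blast
  have "M ** ctrans G ** M = M"
    using arg_cong[OF G(1), of ctrans] by (simp add: ctrans_mult matrix_mul_assoc)
  moreover have "ctrans (ctrans G ** M) = ctrans G ** M"
    using G(2) by (simp add: ctrans_mult)
  ultimately show ?thesis by blast
qed

definition penrose :: "complex^'n^'n \<Rightarrow> complex^'n^'n \<Rightarrow> bool" where
  "penrose A X \<longleftrightarrow> A ** X ** A = A \<and> X ** A ** X = X \<and>
                      ctrans (A ** X) = A ** X \<and> ctrans (X ** A) = X ** A"

lemma penrose_exists: "\<exists>X. penrose A X"
proof -
  obtain G where G: "A ** G ** A = A" "ctrans (A ** G) = A ** G" using one_three by blast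
  obtain F where F: "A ** F ** A = A" "ctrans (F ** A) = F ** A" using one_four by blast
  define X where "X = F ** A ** G"
  have "A ** X ** A = A" by (simp add: X_def matrix_mul_assoc F G)
  moreover have "X ** A ** X = X"
  proof -
    have "X ** A ** X = F ** (A ** G ** A) ** F ** A ** G" by (simp add: X_def matrix_mul_assoc)
    also have "\<dots> = F ** (A ** F ** A) ** G" by (simp add: G matrix_mul_assoc)
    also have "\<dots> = X" by (simp add: F X_def)
    finally show ?thesis .
  qed
  moreover have "A ** X = A ** G" by (simp add: X_def matrix_mul_assoc F)
  moreover have "X ** A = F ** A" unfolding X_def by (metis G(1) matrix_mul_assoc)
  ultimately show ?thesis unfolding penrose_def by (metis F(2) G(2))
qed

lemma penrose_unique:
  assumes X: "penrose A X" and Y: "penrose A Y" shows "X = Y"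
proof -
  have x1: "A ** X ** A = A" and x2: "X ** A ** X = X" and x3: "ctrans (A ** X) = A ** X"
    and x4: "ctrans (X ** A) = X ** A" using X by (auto simp: penrose_def)
  have y1: "A ** Y ** A = A" and y2: "Y ** A ** Y = Y" and y3: "ctrans (A ** Y) = A ** Y"
    and y4: "ctrans (Y ** A) = Y ** A" using Y by (auto simp: penrose_def)
  have "X = X ** ctrans (A ** X)" using x2 x3 by (simp add: matrix_mul_assoc)
  also have "\<dots> = X ** ctrans X ** ctrans (A ** Y ** A)"
    by (simp add: ctrans_mult matrix_mul_assoc y1)
  also have "\<dots> = X ** ctrans (A ** X) ** ctrans (A ** Y)"
    by (simp add: ctrans_mult matrix_mul_assoc)
  also have "\<dots> = X ** A ** Y" using x2 x3 y3 by (simp add: matrix_mul_assoc)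
  finally have e1: "X = X ** A ** Y" .
  have "Y = ctrans (Y ** A) ** Y" using y2 y4 by (simp add: matrix_mul_assoc)
  also have "\<dots> = ctrans (A ** X ** A) ** ctrans Y ** Y"
    by (simp add: ctrans_mult matrix_mul_assoc x1)
  also have "\<dots> = ctrans (X ** A) ** ctrans (Y ** A) ** Y"
    by (simp add: ctrans_mult matrix_mul_assoc)
  also have "\<dots> = X ** A ** (Y ** A ** Y)" using x4 y4 by (simp add: matrix_mul_assoc)
  also have "\<dots> = X ** A ** Y" using y2 by simp
  finally show ?thesis using e1 by simp
qed

lemma mp_inv_penrose: "penrose A (mp_inv A)"
proof -
  obtain X where X: "penrose A X" using penrose_exists by blast
  have "mp_inv A = X" unfolding mp_inv_def
    by (rule the_equality) (use X penrose_unique in \<open>auto simp: penrose_def\<close>)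
  then show ?thesis using X by simp
qed

lemma mp_inv_1: "A ** mp_inv A ** A = A"
  using mp_inv_penrose[of A] unfolding penrose_def by blast



lemma mpow_Suc': "mpow A (Suc k) = mpow A k ** A"
  by (induction k) (simp_all add: matrix_mul_assoc)

lemma mpow_add: "mpow A (i + j) = mpow A i ** mpow A j"
  by (induction i) (simp_all add: matrix_mul_assoc)

lemma colsp_subspace: "vec.subspace (colsp (M::complex^'n^'n))"
  unfolding colsp_def by (rule vec.subspace_image) simp

lemma colsp_mult: "colsp (A ** B) \<subseteq> colsp A"
  unfolding colsp_def by (auto simp: matrix_vector_mul_assoc[symmetric])

lemma colsp_Amult: "colsp (A ** M) = (*v) A ` colsp M"
  unfolding colsp_def by (auto simp: matrix_vector_mul_assoc[symmetric] image_iff)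

lemma colsp_mpow_Suc: "colsp (mpow A (Suc j)) = (*v) A ` colsp (mpow A j)"
  unfolding colsp_def by (auto simp: matrix_vector_mul_assoc[symmetric] image_iff)

lemma colsp_mpow_antimono: "i \<le> j \<Longrightarrow> colsp (mpow A j) \<subseteq> colsp (mpow A i)"
proof (induction j)
  case 0 then show ?case by simp
next
  case (Suc j)
  have "colsp (mpow A (Suc j)) \<subseteq> colsp (mpow A j)"
    by (simp only: mpow_Suc' colsp_mult)
  with Suc show ?case by (cases "i = Suc j") auto
qed

lemma index_exists: "\<exists>k. colsp (mpow (A::complex^'n^'n) k) = colsp (mpow A (Suc k))"
proof (rule ccontr)
  assume "\<not> ?thesis"
  then have ne: "colsp (mpow A (Suc k)) \<noteq> colsp (mpow A k)" for k by metis
  have lt: "vec.dim (colsp (mpow A (Suc k))) < vec.dim (colsp (mpow A k))" for k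
  proof -
    have "colsp (mpow A (Suc k)) \<subset> colsp (mpow A k)"
      using ne[of k] colsp_mpow_antimono[of k "Suc k" A] by auto
    then show ?thesis using vec.dim_psubset[of "colsp (mpow A (Suc k))" "colsp (mpow A k)"]
      by (metis colsp_subspace vec.span_eq_iff)
  qed
  have "vec.dim (colsp (mpow A j)) + j \<le> vec.dim (colsp (mpow A 0))" for j
  proof (induction j)
    case (Suc j) then show ?case using lt[of j] by simp
  qed simp
  from this[of "Suc (vec.dim (colsp (mpow A 0)))"] show False by simp
qed

lemma index_stable:
  assumes "mindex A = k"
  shows "colsp (mpow (A::complex^'n^'n) (k + j)) = colsp (mpow A k)"
proof -
  have k: "colsp (mpow A k) = colsp (mpow A (Suc k))"
    using LeastI_ex[OF index_exists[of A]] assms unfolding mindex_def by simp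
  show ?thesis
  proof (induction j)
    case (Suc j)
    have "colsp (mpow A (k + Suc j)) = (*v) A ` colsp (mpow A (k + j))"
      by (simp add: colsp_Amult)
    also have "\<dots> = (*v) A ` colsp (mpow A k)" using Suc by simp
    also have "\<dots> = colsp (mpow A k)" using k by (simp add: colsp_Amult)
    finally show ?case .
  qed simp
qed

lemma index_sub:
  assumes "mindex A = k"
  shows "colsp (mpow (A::complex^'n^'n) k) \<subseteq> colsp (mpow A m)"
proof (cases "m \<le> k")
  case True then show ?thesis by (rule colsp_mpow_antimono)
next
  case False
  then obtain j where "m = k + j" by (metis le_add_diff_inverse nat_le_linear)
  then show ?thesis using index_stable[OF assms] by simp
qed

lemma surj_imp_inj_on:
  fixes A :: "complex^'n^'n"
  assumes S: "vec.subspace S" and fS: "(*v) A ` S = S"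
  shows "inj_on ((*v) A) S"
proof -
  obtain B where B: "B \<subseteq> S" "vec.independent B" "S \<subseteq> vec.span B" "card B = vec.dim S"
    using vec.basis_exists by blast
  have fin: "finite B" using B(2) vec.finiteI_independent by blast
  have spB: "vec.span B = S" using B S by (metis vec.span_minimal subset_antisym)
  have spfB: "vec.span ((*v) A ` B) = S"
    using fS spB by (simp add: vec.span_image)
  have sub: "(*v) A ` B \<subseteq> S" using B(1) fS by blast
  have c1: "card ((*v) A ` B) \<le> card B" using fin card_image_le by blast
  have indep: "vec.independent ((*v) A ` B)"
    by (rule vec.card_le_dim_spanning[OF sub]) (use spfB fin c1 B in auto)
  have "vec.dim S \<le> card ((*v) A ` B)"
    by (rule vec.span_card_ge_dim[OF sub]) (use spfB fin in auto)
  then have "card ((*v) A ` B) = card B" using c1 B by simp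
  then have "inj_on ((*v) A) B" using fin by (simp add: inj_on_iff_eq_card)
  then have "inj_on ((*v) A) (vec.span B)"
    using vec.inj_on_span_iff_independent_image[OF indep] by simp
  then show ?thesis using spB by simp
qed

lemma index_inj:
  assumes "mindex A = k"
  shows "inj_on ((*v) (A::complex^'n^'n)) (colsp (mpow A k))"
proof (rule surj_imp_inj_on[OF colsp_subspace])
  show "(*v) A ` colsp (mpow A k) = colsp (mpow A k)"
    using index_stable[OF assms, of 1] by (simp add: colsp_Amult)
qed



definition cep :: "complex^'n^'n \<Rightarrow> complex^'n^'n \<Rightarrow> bool" where
  "cep A X \<longleftrightarrow> X ** A ** X = X \<and> colsp X = colsp (mpow A (mindex A)) \<and>
                       colsp (ctrans X) = colsp (mpow A (mindex A))"

lemma fix_on: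
  assumes "X ** A ** X = X" "y \<in> colsp X"
  shows "X *v (A *v y) = (y::complex^'n)"
proof -
  obtain z where z: "y = X *v z" using assms(2) unfolding colsp_def by blast
  have "X *v (A *v y) = (X ** A ** X) *v z" by (simp add: z matrix_vector_mul_assoc matrix_mul_assoc)
  then show ?thesis using assms(1) z by simp
qed

lemma XAZ:
  assumes "X ** A ** X = X" "colsp Z \<subseteq> colsp X"
  shows "X ** A ** (Z::complex^'n^'n) = Z"
proof -
  have "(X ** A ** Z) *v v = Z *v v" for v
  proof -
    have "Z *v v \<in> colsp X" using assms(2) unfolding colsp_def by blast
    then show ?thesis using fix_on[OF assms(1)] by (simp add: matrix_vector_mul_assoc[symmetric])
  qed
  then show ?thesis by (simp add: matrix_eq)
qed

lemma cep_unique: assumes "cep A X" "cep A Y" shows "X = Y"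
proof -
  have x: "X ** A ** X = X" and y: "Y ** A ** Y = Y" using assms by (auto simp: cep_def)
  have x': "ctrans X ** ctrans A ** ctrans X = ctrans X"
    using arg_cong[OF x, of ctrans] by (simp add: ctrans_mult matrix_mul_assoc)
  have "Y ** A ** X = X" by (rule XAZ[OF y]) (use assms in \<open>simp add: cep_def\<close>)
  moreover have "ctrans X ** ctrans A ** ctrans Y = ctrans Y"
    by (rule XAZ[OF x']) (use assms in \<open>simp add: cep_def\<close>)
  then have "Y ** A ** X = Y"
    using arg_cong[of _ _ ctrans] by (metis ctrans_ctrans ctrans_mult matrix_mul_assoc)
  ultimately show ?thesis by simp
qed

lemma cep_exists: "\<exists>X. cep (A::complex^'n^'n) X"
proof -
  define k where "k = mindex A"
  define S where "S = colsp (mpow A k)"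
  define M where "M = mpow A (Suc k)"
  define B where "B = mp_inv M"
  have p: "penrose M B" unfolding B_def by (rule mp_inv_penrose)
  have p1: "M ** B ** M = M" and p2: "B ** M ** B = B" and p3: "ctrans (M ** B) = M ** B"
    and p4: "ctrans (B ** M) = B ** M" using p by (auto simp: penrose_def)
  have cM: "colsp M = S" unfolding M_def S_def using index_stable[of A k 1] k_def by simp
  have AM: "A ** mpow A k = M" by (simp add: M_def)
  have injS: "inj_on ((*v) A) S" unfolding S_def using index_inj k_def by simp
  define X where "X = mpow A k ** B"
  have XAX: "X ** A ** X = X"
  proof -
    have "X ** A ** X = mpow A k ** (B ** (A ** mpow A k) ** B)"
      by (simp add: X_def matrix_mul_assoc)
    also have "\<dots> = X" by (simp add: AM p2 X_def)
    finally show ?thesis .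
  qed
  have c1: "colsp X \<subseteq> S" unfolding X_def S_def by (rule colsp_mult)
  have c2: "S \<subseteq> colsp X"
  proof
    fix y assume yS: "y \<in> S"
    have AyM: "A *v y \<in> colsp M"
      using yS unfolding S_def colsp_def by (auto simp: AM[symmetric] matrix_vector_mul_assoc)
    then obtain w where w: "A *v y = M *v w" unfolding colsp_def by blast
    have "A *v (X *v (A *v y)) = (M ** B ** M) *v w"
      by (simp add: w X_def matrix_vector_mul_assoc AM[symmetric] matrix_mul_assoc)
    also have "\<dots> = A *v y" using p1 w by simp
    finally have "A *v (X *v (A *v y)) = A *v y" .
    moreover have "X *v (A *v y) \<in> S" using c1 unfolding colsp_def by blast
    ultimately have "X *v (A *v y) = y" using injS yS by (meson inj_onD)
    then show "y \<in> colsp X" unfolding colsp_def by (metis rangeI)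
  qed
  have Bs: "ctrans B = M ** B ** ctrans B"
  proof -
    have "B = B ** ctrans (M ** B)" using p2 p3 by (simp add: matrix_mul_assoc)
    then have "B = B ** ctrans B ** ctrans M" by (simp add: ctrans_mult matrix_mul_assoc)
    then have "ctrans B = ctrans (B ** ctrans B ** ctrans M)" by simp
    then show ?thesis by (simp add: ctrans_mult matrix_mul_assoc)
  qed
  have d1: "colsp (ctrans X) \<subseteq> S"
  proof -
    have "ctrans X = M ** (B ** ctrans B ** ctrans (mpow A k))"
      by (simp add: X_def ctrans_mult) (metis Bs matrix_mul_assoc)
    then show ?thesis using colsp_mult cM by metis
  qed
  have d2: "S \<subseteq> colsp (ctrans X)"
  proof
    fix y assume "y \<in> S"
    then obtain w where w: "y = M *v w" using cM unfolding colsp_def by blast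
    have "M = ctrans (M ** B) ** M" using p1 p3 by simp
    also have "\<dots> = ctrans B ** ctrans M ** M" by (simp add: ctrans_mult matrix_mul_assoc)
    also have "\<dots> = ctrans X ** (ctrans A ** M)"
      by (simp add: X_def ctrans_mult AM[symmetric] matrix_mul_assoc)
    finally have "y = ctrans X *v ((ctrans A ** M) *v w)"
      using w by (metis matrix_vector_mul_assoc)
    then show "y \<in> colsp (ctrans X)" unfolding colsp_def by blast
  qed
  have "cep A X" unfolding cep_def using XAX c1 c2 d1 d2 S_def k_def by auto
  then show ?thesis by blast
qed

lemma core_ep_cep: "cep A (core_ep A)"
proof -
  obtain X where X: "cep A X" using cep_exists by blast
  have "core_ep A = X" unfolding core_ep_def
    by (rule the_equality) (use X cep_unique in \<open>auto simp: cep_def\<close>)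
  then show ?thesis using X by simp
qed



theorem corollary4p13:
  fixes A X :: "complex^'n^'n" and m k :: nat
  assumes "mindex A = k" and "m \<ge> 1"
  shows "(X = m_wcore m A \<longleftrightarrow>
            (A ** X = mpow (core_ep A) m ** mpow A m ** proj (mpow A m) \<and>
             colsp X = colsp (mpow A k)))
       \<and> (X = m_wcore m A \<longleftrightarrow>
            (A ** X = mpow (core_ep A) m ** mpow A m ** proj (mpow A m) \<and>
             A ** (X ** X) = X))"
proof -
  define S where "S = colsp (mpow A k)"
  define C where "C = core_ep A"
  define P where "P = proj (mpow A m)"
  define W where "W = m_wcore m A"
  define G where "G = mpow C m ** mpow A m ** P"
  obtain m' where m': "m = Suc m'" using assms(2) by (cases m) auto
  have cep: "cep A C" unfolding C_def by (rule core_ep_cep)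
  have CAC: "C ** A ** C = C" and cC: "colsp C = S" and cCt: "colsp (ctrans C) = S"
    using cep assms(1) by (auto simp: cep_def S_def)
  have Ssub: "vec.subspace S" unfolding S_def by (rule colsp_subspace)
  have AS: "A *v y \<in> S" if "y \<in> S" for y
  proof -
    have "A *v y \<in> colsp (mpow A (k + 1))"
      using that unfolding S_def by (simp add: colsp_Amult)
    then show ?thesis using index_stable[OF assms(1), of 1] S_def by simp
  qed
  have D1: "C *v (A *v y) = y" if "y \<in> S" for y
    using fix_on[OF CAC] that cC by simp
  have inj: "y = z" if "y \<in> S" "z \<in> S" "A *v y = A *v z" for y z
    using D1[OF that(1)] D1[OF that(2)] that(3) by metis
  have CS: "C *v y \<in> S" for y using cC unfolding colsp_def by blast
  have D2: "A *v (C *v y) = y" if yS: "y \<in> S" for y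
  proof -
    define z where "z = A *v (C *v y) - y"
    have zS: "z \<in> S" unfolding z_def using AS[OF CS] yS Ssub by (simp add: vec.subspace_diff)
    have "C *v (A *v (C *v y)) = C *v y" using D1[OF CS] .
    then have Cz: "C *v z = 0" by (simp add: z_def matrix_vector_mult_diff_distrib)
    obtain w where w: "z = ctrans C *v w" using zS cCt unfolding colsp_def by blast
    have "cinner z z = cinner w (C *v z)" using cinner_mat[of "ctrans C" w z] w by simp
    then have "z = 0" using Cz by (simp add: cinner_self_0)
    then show ?thesis by (simp add: z_def)
  qed
  have D3: "P *v y = y" if ym: "y \<in> colsp (mpow A m)" for y
  proof -
    obtain z where z: "y = mpow A m *v z" using ym unfolding colsp_def by blast
    have "P *v y = (mpow A m ** mp_inv (mpow A m) ** mpow A m) *v z"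
      by (simp add: P_def proj_def z matrix_vector_mul_assoc)
    then show ?thesis using mp_inv_1 z by metis
  qed
  have D3': "P *v y = y" if "y \<in> S" for y
    using D3 index_sub[OF assms(1), of m] that S_def by blast
  have CpS: "mpow C (Suc j) *v y \<in> S" for j y
    using CS[of "mpow C j *v y"] by (simp add: matrix_vector_mul_assoc)
  have L1: "A *v (mpow C (Suc (Suc j)) *v y) = mpow C (Suc j) *v y" for j y
    using D2[OF CpS[of j y]] by (simp add: matrix_vector_mul_assoc)
  have L2: "mpow C j *v (mpow A j *v y) = y" if "y \<in> S" for j y
    using that
  proof (induction j arbitrary: y)
    case 0 then show ?case by simp
  next
    case (Suc j)
    have "mpow C (Suc j) *v (mpow A (Suc j) *v y) = C *v (mpow C j *v (mpow A j *v (A *v y)))"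
      by (simp only: mpow_Suc'[of A j] mpow.simps(2)[of C j] matrix_vector_mul_assoc matrix_mul_assoc)
    also have "\<dots> = C *v (A *v y)" using Suc.IH[OF AS[OF Suc.prems]] by simp
    also have "\<dots> = y" using D1[OF Suc.prems] .
    finally show ?case .
  qed
  have Wdef: "W = mpow C (Suc m) ** mpow A m ** P"
    by (simp add: W_def m_wcore_def m_wg_def C_def P_def)
  have WS: "W *v v \<in> S" for v
    using CpS[of m "mpow A m *v (P *v v)"] by (simp add: Wdef matrix_vector_mul_assoc matrix_mul_assoc)
  have GS: "G *v v \<in> S" for v
    using CpS[of m' "mpow A m *v (P *v v)"] by (simp add: G_def m' matrix_vector_mul_assoc matrix_mul_assoc)
  have Gid: "G *v y = y" if "y \<in> S" for y
    using L2[OF that, of m] D3'[OF that] by (simp add: G_def matrix_vector_mul_assoc[symmetric])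
  have AW: "A ** W = G"
  proof -
    have "(A ** W) *v v = G *v v" for v
      using L1[of m' "mpow A m *v (P *v v)"]
      by (simp add: Wdef G_def m' matrix_vector_mul_assoc[symmetric] del: mpow.simps)
    then show ?thesis by (simp add: matrix_eq)
  qed
  have uniq: "X = W" if "A ** X = G" "\<And>v. X *v v \<in> S"
  proof -
    have "X *v v = W *v v" for v
    proof (rule inj[OF that(2) WS])
      show "A *v (X *v v) = A *v (W *v v)"
        using that(1) AW by (simp add: matrix_vector_mul_assoc)
    qed
    then show ?thesis by (simp add: matrix_eq)
  qed
  have cW: "colsp W = S"
  proof
    show "colsp W \<subseteq> S" using WS unfolding colsp_def by blast
    show "S \<subseteq> colsp W"
    proof
      fix x assume xS: "x \<in> S"
      have "x \<in> colsp (mpow A (k + m'))" using xS index_stable[OF assms(1), of m'] S_def by simp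
      then obtain v where v: "x = mpow A (k + m') *v v" unfolding colsp_def by blast
      define u where "u = mpow A k *v v"
      have xu: "x = mpow A m' *v u"
        by (simp add: v u_def matrix_vector_mul_assoc mpow_add[symmetric] add.commute)
      have Pm: "P *v (mpow A m *v u) = mpow A m *v u" by (rule D3) (simp add: colsp_def)
      have mm: "m + m = Suc m + m'" using m' by simp
      have "mpow A m ** mpow A m = mpow A (Suc m) ** mpow A m'"
        by (metis mpow_add mm)
      then have "mpow A m *v (mpow A m *v u) = mpow A (Suc m) *v x"
        by (simp only: xu matrix_vector_mul_assoc)
      then have "W *v (mpow A m *v u) = mpow C (Suc m) *v (mpow A (Suc m) *v x)"
        by (simp add: Wdef matrix_vector_mul_assoc[symmetric] Pm del: mpow.simps)
      also have "\<dots> = x" using L2[OF xS] .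
      finally show "x \<in> colsp W" unfolding colsp_def by (metis rangeI)
    qed
  qed
  have AWW: "A ** (W ** W) = W"
  proof -
    have "(A ** (W ** W)) *v v = W *v v" for v
      using Gid[OF WS[of v]] AW by (simp add: matrix_vector_mul_assoc[symmetric] matrix_mul_assoc)
    then show ?thesis by (simp add: matrix_eq)
  qed
  have eqG: "mpow (core_ep A) m ** mpow A m ** proj (mpow A m) = G"
    by (simp add: G_def C_def P_def)
  have b: "X = W \<longleftrightarrow> (A ** X = G \<and> colsp X = S)"
  proof
    assume "A ** X = G \<and> colsp X = S"
    then show "X = W" using uniq unfolding colsp_def by blast
  qed (use AW cW in auto)
  have c: "X = W \<longleftrightarrow> (A ** X = G \<and> A ** (X ** X) = X)"
  proof
    assume h: "A ** X = G \<and> A ** (X ** X) = X"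
    have "X *v v \<in> S" for v
    proof -
      have "X *v v = (A ** (X ** X)) *v v" using h by simp
      also have "\<dots> = G *v (X *v v)" using h by (simp add: matrix_vector_mul_assoc[symmetric] matrix_mul_assoc)
      finally show ?thesis using GS by metis
    qed
    then show "X = W" using uniq h by blast
  qed (use AW AWW in auto)
  show ?thesis using b c unfolding eqG W_def S_def by blast
qed

end
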